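(* Let $N\ge 1$ and let the data consist of $(Y_i,D_i,Z_i,X_i)$, $i=1,\dots,N$, with $Y_i\in\mathbb{R}$, $D_i,Z_i\in\{0,1\}$, and let $p$ be a fixed (known) function with values in $(0,1)$; write $p_i=p(X_i)$. Define $\kappa_{i1}=D_i\frac{Z_i-p_i}{p_i(1-p_i)}$, $\kappa_{i0}=(1-D_i)\frac{(1-Z_i)-(1-p_i)}{p_i(1-p_i)}$, $\kappa_i=1-\frac{D_i(1-Z_i)}{1-p_i}-\frac{(1-D_i)Z_i}{p_i}$, and the estimators $$\hat\tau_a=\Big[\sum_i\kappa_i\Big]^{-1}\sum_i Y_i\frac{Z_i-p_i}{p_i(1-p_i)},\quad \hat\tau_{a,1}=\Big[\sum_i\kappa_{i1}\Big]^{-1}\sum_i Y_i\frac{Z_i-p_i}{p_i(1-p_i)},\quad \hat\tau_{a,0}=\Big[\sum_i\kappa_{i0}\Big]^{-1}\sum_i Y_i\frac{Z_i-p_i}{p_i(1-p_i)},$$ $$\hat\tau_t=\Big[\sum_i\frac{D_iZ_i}{p_i}-\sum_i\frac{D_i(1-Z_i)}{1-p_i}\Big]^{-1}\Big[\sum_i\frac{Y_iZ_i}{p_i}-\sum_i\frac{Y_i(1-Z_i)}{1-p_i}\Big],$$ $$\hat\tau_{a,10}=\Big[\sum_i\kappa_{i1}\Big]^{-1}\sum_i\kappa_{i1}Y_i-\Big[\sum_i\kappa_{i0}\Big]^{-1}\sum_i\kappa_{i0}Y_i,$$ $$\hat\tau_{t,norm}=\frac{\big[\sum_i\frac{Z_i}{p_i}\big]^{-1}\sum_i\frac{Y_iZ_i}{p_i}-\big[\sum_i\frac{1-Z_i}{1-p_i}\big]^{-1}\sum_i\frac{Y_i(1-Z_i)}{1-p_i}}{\big[\sum_i\frac{Z_i}{p_i}\big]^{-1}\sum_i\frac{D_iZ_i}{p_i}-\big[\sum_i\frac{1-Z_i}{1-p_i}\big]^{-1}\sum_i\frac{D_i(1-Z_i)}{1-p_i}}$$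 (each considered where its denominators are nonzero). Then $\hat\tau_{t,norm}$ and $\hat\tau_{a,10}$ are translation invariant and scale invariant with respect to the natural logarithm, whereas $\hat\tau_a$, $\hat\tau_t$ ($=\hat\tau_{a,1}$) and $\hat\tau_{a,0}$ are not translation invariant and not scale invariant with respect to the natural logarithm.
   Context: Write $\mathbf{Y}=(Y_1,\dots,Y_N)$ and $\mathbf{W}$ for the remaining data $(D_i,Z_i,X_i)_{i=1}^N$, and view an estimator as a function $\hat\tau(\mathbf{Y},\mathbf{W})$. An estimator is translation invariant if $\hat\tau(\mathbf{Y},\mathbf{W})=\hat\tau(\mathbf{Y}+k,\mathbf{W})$ for all $\mathbf{Y}$, $\mathbf{W}$ and real $k$ (where $\mathbf{Y}+k$ adds $k$ to every coordinate). An estimator is scale invariant with respect to the natural logarithm if $\hat\tau(\log\mathbf{Y},\mathbf{W})=\hat\tau(\log(a\mathbf{Y}),\mathbf{W})$ for all $\mathbf{Y}>0$ (coordinatewise), all $\mathbf{W}$ and all $a>0$, where $\log$ is applied coordinatewise. "Not translation invariant / not scale invariant" means these identities fail for some admissible data and some $k$ (resp. $a$). *)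

theory Defs
  imports Complex_Main
begin

text \<open>Observations are indexed by i in {..<N} (i.e. 0..N-1 standing for 1..N).
  The remaining data W = (D, Z, X); D i, Z i are real numbers required to lie in {0,1};
  p is the fixed known propensity function, p_i = p (X i).\<close>

type_synonym 'x data = "(nat \<Rightarrow> real) \<times> (nat \<Rightarrow> real) \<times> (nat \<Rightarrow> 'x)"

definition kappa1 :: "('x \<Rightarrow> real) \<Rightarrow> 'x data \<Rightarrow> nat \<Rightarrow> real" where
  "kappa1 p W i = (case W of (D, Z, X) \<Rightarrow>
     D i * (Z i - p (X i)) / (p (X i) * (1 - p (X i))))"

definition kappa0 :: "('x \<Rightarrow> real) \<Rightarrow> 'x data \<Rightarrow> nat \<Rightarrow> real" where
  "kappa0 p W i = (case W of (D, Z, X) \<Rightarrow>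
     (1 - D i) * ((1 - Z i) - (1 - p (X i))) / (p (X i) * (1 - p (X i))))"

definition kappa :: "('x \<Rightarrow> real) \<Rightarrow> 'x data \<Rightarrow> nat \<Rightarrow> real" where
  "kappa p W i = (case W of (D, Z, X) \<Rightarrow>
     1 - D i * (1 - Z i) / (1 - p (X i)) - (1 - D i) * Z i / p (X i))"

definition ipw_num :: "nat \<Rightarrow> ('x \<Rightarrow> real) \<Rightarrow> (nat \<Rightarrow> real) \<Rightarrow> 'x data \<Rightarrow> real" where
  "ipw_num N p Y W = (case W of (D, Z, X) \<Rightarrow>
     (\<Sum>i<N. Y i * (Z i - p (X i)) / (p (X i) * (1 - p (X i)))))"

definition tau_a :: "nat \<Rightarrow> ('x \<Rightarrow> real) \<Rightarrow> (nat \<Rightarrow> real) \<Rightarrow> 'x data \<Rightarrow> real" where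
  "tau_a N p Y W = ipw_num N p Y W / (\<Sum>i<N. kappa p W i)"

definition tau_a1 :: "nat \<Rightarrow> ('x \<Rightarrow> real) \<Rightarrow> (nat \<Rightarrow> real) \<Rightarrow> 'x data \<Rightarrow> real" where
  "tau_a1 N p Y W = ipw_num N p Y W / (\<Sum>i<N. kappa1 p W i)"

definition tau_a0 :: "nat \<Rightarrow> ('x \<Rightarrow> real) \<Rightarrow> (nat \<Rightarrow> real) \<Rightarrow> 'x data \<Rightarrow> real" where
  "tau_a0 N p Y W = ipw_num N p Y W / (\<Sum>i<N. kappa0 p W i)"

definition tau_t_den :: "nat \<Rightarrow> ('x \<Rightarrow> real) \<Rightarrow> 'x data \<Rightarrow> real" where
  "tau_t_den N p W = (case W of (D, Z, X) \<Rightarrow>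
     (\<Sum>i<N. D i * Z i / p (X i)) - (\<Sum>i<N. D i * (1 - Z i) / (1 - p (X i))))"

definition tau_t :: "nat \<Rightarrow> ('x \<Rightarrow> real) \<Rightarrow> (nat \<Rightarrow> real) \<Rightarrow> 'x data \<Rightarrow> real" where
  "tau_t N p Y W = (case W of (D, Z, X) \<Rightarrow>
     ((\<Sum>i<N. Y i * Z i / p (X i)) - (\<Sum>i<N. Y i * (1 - Z i) / (1 - p (X i))))
     / tau_t_den N p W)"

definition tau_a10 :: "nat \<Rightarrow> ('x \<Rightarrow> real) \<Rightarrow> (nat \<Rightarrow> real) \<Rightarrow> 'x data \<Rightarrow> real" where
  "tau_a10 N p Y W =
     (\<Sum>i<N. kappa1 p W i * Y i) / (\<Sum>i<N. kappa1 p W i)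
   - (\<Sum>i<N. kappa0 p W i * Y i) / (\<Sum>i<N. kappa0 p W i)"

definition sZ :: "nat \<Rightarrow> ('x \<Rightarrow> real) \<Rightarrow> 'x data \<Rightarrow> real" where
  "sZ N p W = (case W of (D, Z, X) \<Rightarrow> \<Sum>i<N. Z i / p (X i))"

definition s1Z :: "nat \<Rightarrow> ('x \<Rightarrow> real) \<Rightarrow> 'x data \<Rightarrow> real" where
  "s1Z N p W = (case W of (D, Z, X) \<Rightarrow> \<Sum>i<N. (1 - Z i) / (1 - p (X i)))"

definition tnorm_den :: "nat \<Rightarrow> ('x \<Rightarrow> real) \<Rightarrow> 'x data \<Rightarrow> real" where
  "tnorm_den N p W = (case W of (D, Z, X) \<Rightarrow>
     (\<Sum>i<N. D i * Z i / p (X i)) / sZ N p W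
   - (\<Sum>i<N. D i * (1 - Z i) / (1 - p (X i))) / s1Z N p W)"

definition tau_tnorm :: "nat \<Rightarrow> ('x \<Rightarrow> real) \<Rightarrow> (nat \<Rightarrow> real) \<Rightarrow> 'x data \<Rightarrow> real" where
  "tau_tnorm N p Y W = (case W of (D, Z, X) \<Rightarrow>
     ((\<Sum>i<N. Y i * Z i / p (X i)) / sZ N p W
      - (\<Sum>i<N. Y i * (1 - Z i) / (1 - p (X i))) / s1Z N p W)
     / tnorm_den N p W)"

definition binary_data :: "nat \<Rightarrow> 'x data \<Rightarrow> bool" where
  "binary_data N W = (case W of (D, Z, X) \<Rightarrow>
     (\<forall>i<N. D i \<in> {0, 1} \<and> Z i \<in> {0, 1}))"

definition adm_a :: "nat \<Rightarrow> ('x \<Rightarrow> real) \<Rightarrow> 'x data \<Rightarrow> bool" where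
  "adm_a N p W \<longleftrightarrow> binary_data N W \<and> (\<Sum>i<N. kappa p W i) \<noteq> 0"
definition adm_a1 :: "nat \<Rightarrow> ('x \<Rightarrow> real) \<Rightarrow> 'x data \<Rightarrow> bool" where
  "adm_a1 N p W \<longleftrightarrow> binary_data N W \<and> (\<Sum>i<N. kappa1 p W i) \<noteq> 0"
definition adm_a0 :: "nat \<Rightarrow> ('x \<Rightarrow> real) \<Rightarrow> 'x data \<Rightarrow> bool" where
  "adm_a0 N p W \<longleftrightarrow> binary_data N W \<and> (\<Sum>i<N. kappa0 p W i) \<noteq> 0"
definition adm_t :: "nat \<Rightarrow> ('x \<Rightarrow> real) \<Rightarrow> 'x data \<Rightarrow> bool" where
  "adm_t N p W \<longleftrightarrow> binary_data N W \<and> tau_t_den N p W \<noteq> 0"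
definition adm_a10 :: "nat \<Rightarrow> ('x \<Rightarrow> real) \<Rightarrow> 'x data \<Rightarrow> bool" where
  "adm_a10 N p W \<longleftrightarrow> binary_data N W \<and> (\<Sum>i<N. kappa1 p W i) \<noteq> 0
      \<and> (\<Sum>i<N. kappa0 p W i) \<noteq> 0"
definition adm_tnorm :: "nat \<Rightarrow> ('x \<Rightarrow> real) \<Rightarrow> 'x data \<Rightarrow> bool" where
  "adm_tnorm N p W \<longleftrightarrow> binary_data N W \<and> sZ N p W \<noteq> 0 \<and> s1Z N p W \<noteq> 0
      \<and> tnorm_den N p W \<noteq> 0"

definition translation_invariant ::
  "nat \<Rightarrow> ((nat \<Rightarrow> real) \<Rightarrow> 'w \<Rightarrow> real) \<Rightarrow> ('w \<Rightarrow> bool) \<Rightarrow> bool" where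
  "translation_invariant N est adm \<longleftrightarrow>
     (\<forall>Y W (k::real). adm W \<longrightarrow> est Y W = est (\<lambda>i. Y i + k) W)"

definition scale_invariant_ln ::
  "nat \<Rightarrow> ((nat \<Rightarrow> real) \<Rightarrow> 'w \<Rightarrow> real) \<Rightarrow> ('w \<Rightarrow> bool) \<Rightarrow> bool" where
  "scale_invariant_ln N est adm \<longleftrightarrow>
     (\<forall>Y W (a::real). adm W \<longrightarrow> (\<forall>i<N. Y i > 0) \<longrightarrow> a > 0 \<longrightarrow>
        est (\<lambda>i. ln (Y i)) W = est (\<lambda>i. ln (a * Y i)) W)"

end

theory Submission
  imports Defs
begin

lemma scale_from_trans:
  fixes est :: "(nat \<Rightarrow> real) \<Rightarrow> 'w \<Rightarrow> real"
  assumes TI: "translation_invariant N est adm"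
    and cg: "\<And>Y Y' W. (\<forall>i<N. Y i = Y' i) \<Longrightarrow> est Y W = est Y' W"
  shows "scale_invariant_ln N est adm"
  unfolding scale_invariant_ln_def
proof (intro allI impI)
  fix Y :: "nat \<Rightarrow> real" and W and a :: real
  assume h: "adm W" "\<forall>i<N. 0 < Y i" "0 < a"
  have "est (\<lambda>i. ln (a * Y i)) W = est (\<lambda>i. ln (Y i) + ln a) W"
    by (rule cg) (use h in \<open>auto simp: ln_mult\<close>)
  moreover have "est (\<lambda>i. ln (Y i)) W = est (\<lambda>i. ln (Y i) + ln a) W"
    using TI h(1) unfolding translation_invariant_def by blast
  ultimately show "est (\<lambda>i. ln (Y i)) W = est (\<lambda>i. ln (a * Y i)) W" by simp
qed

lemma noninv:
  assumes "adm W" "est (\<lambda>i. 0) W \<noteq> est (\<lambda>i. 1) W"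
  shows "\<not> translation_invariant N est adm \<and> \<not> scale_invariant_ln N est adm"
proof
  show "\<not> translation_invariant N est adm"
    unfolding translation_invariant_def
  proof
    assume "\<forall>Y W (k::real). adm W \<longrightarrow> est Y W = est (\<lambda>i. Y i + k) W"
    then have "est (\<lambda>i. 0) W = est (\<lambda>i. 0 + 1) W" using assms(1) by blast
    then show False using assms(2) by simp
  qed
  show "\<not> scale_invariant_ln N est adm"
    unfolding scale_invariant_ln_def
  proof
    assume "\<forall>Y W (a::real). adm W \<longrightarrow> (\<forall>i<N. Y i > 0) \<longrightarrow> a > 0 \<longrightarrow>
        est (\<lambda>i. ln (Y i)) W = est (\<lambda>i. ln (a * Y i)) W"
    note H = this
    have "est (\<lambda>i. ln 1) W = est (\<lambda>i. ln (exp 1 * 1)) W"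
      using H[rule_format, where Y="\<lambda>i. 1" and W=W and a="exp 1"] assms(1) by simp
    then show False using assms(2) by simp
  qed
qed

lemma sum_shift: "(\<Sum>i<N. (Y i + (k::real)) * g i) = (\<Sum>i<N. Y i * g i) + k * (\<Sum>i<N. g i)"
  by (simp add: distrib_right sum.distrib sum_distrib_left)

lemma key: "(p::real) \<noteq> 0 \<Longrightarrow> 1 - p \<noteq> 0 \<Longrightarrow> a * Z / p - a * (1 - Z) / (1 - p) = a * (Z - p) / (p * (1 - p))"
  by (simp add: field_simps)

lemma div_shift: "S \<noteq> 0 \<Longrightarrow> (A + k * S) / S = A / S + (k::real)"
  by (simp add: field_simps)

lemma tnorm_TI: "translation_invariant N (tau_tnorm N p) (adm_tnorm N p)"
  unfolding translation_invariant_def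
proof (intro allI impI)
  fix Y W and k :: real
  assume a: "adm_tnorm N p W"
  obtain D Z X where W: "W = (D, Z, X)" by (cases W) auto
  have s1: "sZ N p W \<noteq> 0" "s1Z N p W \<noteq> 0" using a by (auto simp: adm_tnorm_def)
  have e1: "(\<Sum>i<N. (Y i + k) * Z i / p (X i)) = (\<Sum>i<N. Y i * Z i / p (X i)) + k * sZ N p W"
    using sum_shift[of Y k "\<lambda>i. Z i / p (X i)" N] by (simp add: W sZ_def)
  have e2: "(\<Sum>i<N. (Y i + k) * (1 - Z i) / (1 - p (X i))) = (\<Sum>i<N. Y i * (1 - Z i) / (1 - p (X i))) + k * s1Z N p W"
    using sum_shift[of Y k "\<lambda>i. (1 - Z i) / (1 - p (X i))" N] by (simp add: W s1Z_def)
  show "tau_tnorm N p Y W = tau_tnorm N p (\<lambda>i. Y i + k) W"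
    unfolding tau_tnorm_def W prod.case e1[unfolded W] e2[unfolded W]
    using s1 by (simp add: W div_shift)
qed

lemma tnorm_cg: "(\<forall>i<N. Y i = Y' i) \<Longrightarrow> tau_tnorm N p Y W = tau_tnorm N p Y' W"
  by (cases W) (simp add: tau_tnorm_def)

lemma a10_TI: "translation_invariant N (tau_a10 N p) (adm_a10 N p)"
  unfolding translation_invariant_def
proof (intro allI impI)
  fix Y W and k :: real
  assume a: "adm_a10 N p W"
  have s: "(\<Sum>i<N. kappa1 p W i) \<noteq> 0" "(\<Sum>i<N. kappa0 p W i) \<noteq> 0" using a by (auto simp: adm_a10_def)
  have e1: "(\<Sum>i<N. kappa1 p W i * (Y i + k)) = (\<Sum>i<N. kappa1 p W i * Y i) + k * (\<Sum>i<N. kappa1 p W i)"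
    using sum_shift[of Y k "kappa1 p W" N] by (simp add: mult.commute)
  have e0: "(\<Sum>i<N. kappa0 p W i * (Y i + k)) = (\<Sum>i<N. kappa0 p W i * Y i) + k * (\<Sum>i<N. kappa0 p W i)"
    using sum_shift[of Y k "kappa0 p W" N] by (simp add: mult.commute)
  show "tau_a10 N p Y W = tau_a10 N p (\<lambda>i. Y i + k) W"
    unfolding tau_a10_def e1 e0 using s by (simp add: div_shift)
qed

lemma a10_cg: "(\<forall>i<N. Y i = Y' i) \<Longrightarrow> tau_a10 N p Y W = tau_a10 N p Y' W"
  by (simp add: tau_a10_def)

lemma t_eq:
  fixes p :: "'x \<Rightarrow> real"
  assumes p: "\<And>x. 0 < p x \<and> p x < 1"
  shows "tau_t N p = tau_a1 N p" "tau_t_den N p W = (\<Sum>i<N. kappa1 p W i)"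
proof -
  have pp: "p x \<noteq> 0" "1 - p x \<noteq> 0" for x using p[of x] by auto
  have d: "tau_t_den N p W = (\<Sum>i<N. kappa1 p W i)" for W
  proof (cases W)
    case (fields D Z X)
    show ?thesis unfolding fields tau_t_den_def kappa1_def prod.case sum_subtractf[symmetric]
      by (intro sum.cong refl key pp)
  qed
  show "tau_t_den N p W = (\<Sum>i<N. kappa1 p W i)" by (rule d)
  show "tau_t N p = tau_a1 N p"
  proof (intro ext)
    fix Y :: "nat \<Rightarrow> real" and W :: "'x data"
    obtain D Z X where W: "W = (D, Z, X)" by (cases W) auto
    have "(\<Sum>i<N. Y i * Z i / p (X i)) - (\<Sum>i<N. Y i * (1 - Z i) / (1 - p (X i))) = ipw_num N p Y W"
      unfolding W ipw_num_def prod.case sum_subtractf[symmetric]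
      by (intro sum.cong refl key pp)
    then show "tau_t N p Y W = tau_a1 N p Y W"
      unfolding tau_t_def tau_a1_def d by (simp add: W)
  qed
qed

theorem proposition1:
  fixes N :: nat and p :: "'x \<Rightarrow> real"
  assumes "N \<ge> 1"
    and "\<And>x. 0 < p x \<and> p x < 1"
  shows "translation_invariant N (tau_tnorm N p) (adm_tnorm N p)
       \<and> scale_invariant_ln N (tau_tnorm N p) (adm_tnorm N p)
       \<and> translation_invariant N (tau_a10 N p) (adm_a10 N p)
       \<and> scale_invariant_ln N (tau_a10 N p) (adm_a10 N p)
       \<and> \<not> translation_invariant N (tau_a N p) (adm_a N p)
       \<and> \<not> scale_invariant_ln N (tau_a N p) (adm_a N p)
       \<and> (\<forall>Y W. binary_data N W \<longrightarrow> tau_t N p Y W = tau_a1 N p Y W)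
       \<and> \<not> translation_invariant N (tau_t N p) (adm_t N p)
       \<and> \<not> scale_invariant_ln N (tau_t N p) (adm_t N p)
       \<and> \<not> translation_invariant N (tau_a1 N p) (adm_a1 N p)
       \<and> \<not> scale_invariant_ln N (tau_a1 N p) (adm_a1 N p)
       \<and> \<not> translation_invariant N (tau_a0 N p) (adm_a0 N p)
       \<and> \<not> scale_invariant_ln N (tau_a0 N p) (adm_a0 N p)"
proof -
  define x0 :: 'x where "x0 = undefined"
  define q where "q = p x0"
  have q: "0 < q" "q < 1" using assms(2)[of x0] by (auto simp: q_def)
  have Npos: "real N \<noteq> 0" using assms(1) by auto
  define W1 :: "'x data" where "W1 = (\<lambda>i. 1, \<lambda>i. 1, \<lambda>i. x0)"
  define W0 :: "'x data" where "W0 = (\<lambda>i. 0, \<lambda>i. 1, \<lambda>i. x0)"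
  have bin: "binary_data N W1" "binary_data N W0" by (auto simp: binary_data_def W1_def W0_def)
  have ip0: "ipw_num N p (\<lambda>i. 0) W = 0" for W by (cases W) (simp add: ipw_num_def)
  have ip1: "ipw_num N p (\<lambda>i. 1) W1 = real N / q" "ipw_num N p (\<lambda>i. 1) W0 = real N / q"
    using q by (simp_all add: ipw_num_def W1_def W0_def q_def[symmetric] field_simps)
  have k: "(\<Sum>i<N. kappa p W1 i) = real N"
    by (simp add: kappa_def W1_def)
  have k1: "(\<Sum>i<N. kappa1 p W1 i) = real N / q"
    using q by (simp add: kappa1_def W1_def q_def[symmetric] field_simps)
  have k0: "(\<Sum>i<N. kappa0 p W0 i) = - real N / q"
    using q by (simp add: kappa0_def W0_def q_def[symmetric] field_simps)
  have nA: "\<not> translation_invariant N (tau_a N p) (adm_a N p) \<and> \<not> scale_invariant_ln N (tau_a N p) (adm_a N p)"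
    by (rule noninv[of _ W1]) (use Npos q bin in \<open>auto simp: adm_a_def tau_a_def k ip0 ip1\<close>)
  have nA1: "\<not> translation_invariant N (tau_a1 N p) (adm_a1 N p) \<and> \<not> scale_invariant_ln N (tau_a1 N p) (adm_a1 N p)"
    by (rule noninv[of _ W1]) (use Npos q bin in \<open>auto simp: adm_a1_def tau_a1_def k1 ip0 ip1\<close>)
  have nA0: "\<not> translation_invariant N (tau_a0 N p) (adm_a0 N p) \<and> \<not> scale_invariant_ln N (tau_a0 N p) (adm_a0 N p)"
    by (rule noninv[of _ W0]) (use Npos q bin in \<open>auto simp: adm_a0_def tau_a0_def k0 ip0 ip1\<close>)
  have adm_eq: "adm_t N p = adm_a1 N p"
    by (intro ext) (simp add: adm_t_def adm_a1_def t_eq(2)[OF assms(2)])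
  show ?thesis
    using nA nA1 nA0 tnorm_TI[of N p] a10_TI[of N p]
      scale_from_trans[OF tnorm_TI tnorm_cg, of N p] scale_from_trans[OF a10_TI a10_cg, of N p]
    by (simp add: t_eq(1)[OF assms(2)] adm_eq)
qed

end
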